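(* For every behavior $r$ and every language $K\subseteq\Sigma^*$, $L(\mathcal C(r),K)=L(\mathcal C(r))\,\|\,K$.
   Context: Let $\Sigma$ be a finite alphabet. Behaviors are the terms generated by $r,s ::= \phi \mid \varepsilon \mid x\ (x\in\Sigma) \mid r+s \mid r\cdot s \mid r^* \mid \mathrm{fork}(r)$. For words $v,w\in\Sigma^*$ the shuffle $v\| w\subseteq \Sigma^*$ is defined by $\varepsilon\|w=\{w\}$, $v\|\varepsilon=\{v\}$, $xv\|yw=\{x\}\cdot(v\|yw)\cup\{y\}\cdot(xv\|w)$ for $x,y\in\Sigma$, and it is lifted to languages by $L\|M=\bigcup_{v\in L,w\in M} v\|w$; $L\cdot M$ denotes concatenation of languages. For $K\subseteq\Sigma^*$ the trace language $L(r,K)\subseteq\Sigma^*$ is defined by structural recursion: $L(\phi,K)=\emptyset$, $L(\varepsilon,K)=K$, $L(x,K)=\{x\}\cdot K$, $L(r+s,K)=L(r,K)\cup L(s,K)$, $L(r\cdot s,K)=L(r,L(s,K))$, $L(r^*,K)$ is the least fixpoint (w.r.t. $\subseteq$) of the monotone map $X\mapsto L(r,X)\cup K$, and $L(\mathrm{fork}(r),K)=L(r)\|K$, where $L(r)=L(r,\{\varepsilon\})$. The concurrent part $\mathcal C(r)$ is the behavior defined by: $\mathcal C(\phi)=\phi$, $\mathcal C(\varepsilon)=\varepsilon$, $\mathcal C(x)=\phi$, $\mathcal C(r+s)=\mathcal C(r)+\mathcal C(s)$, $\mathcal C(r\cdot s)=\mathcal C(r)\cdot\mathcal C(s)$, $\mathcal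 C(r^* )=\mathcal C(r)^*$, $\mathcal C(\mathrm{fork}(r))=\mathrm{fork}(r)$. *)

theory Defs
  imports Main
begin

datatype 'a beh =
    Zero
  | One
  | Atom 'a
  | Plus "'a beh" "'a beh"
  | Times "'a beh" "'a beh"
  | Star "'a beh"
  | Fork "'a beh"

fun shuffle :: "'a list \<Rightarrow> 'a list \<Rightarrow> 'a list set" where
  "shuffle [] w = {w}"
| "shuffle v [] = {v}"
| "shuffle (x # v) (y # w) =
     ((\<lambda>u. x # u) ` shuffle v (y # w)) \<union> ((\<lambda>u. y # u) ` shuffle (x # v) w)"

definition shuffle_lang :: "'a list set \<Rightarrow> 'a list set \<Rightarrow> 'a list set" where
  "shuffle_lang L M = (\<Union>v\<in>L. \<Union>w\<in>M. shuffle v w)"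

definition conc :: "'a list set \<Rightarrow> 'a list set \<Rightarrow> 'a list set" where
  "conc L M = {v @ w | v w. v \<in> L \<and> w \<in> M}"

fun trace :: "'a beh \<Rightarrow> 'a list set \<Rightarrow> 'a list set" where
  "trace Zero K = {}"
| "trace One K = K"
| "trace (Atom x) K = conc {[x]} K"
| "trace (Plus r s) K = trace r K \<union> trace s K"
| "trace (Times r s) K = trace r (trace s K)"
| "trace (Star r) K = lfp (\<lambda>X. trace r X \<union> K)"
| "trace (Fork r) K = shuffle_lang (trace r {[]}) K"

abbreviation lang :: "'a beh \<Rightarrow> 'a list set" where
  "lang r \<equiv> trace r {[]}"

fun conc_part :: "'a beh \<Rightarrow> 'a beh" where
  "conc_part Zero = Zero"
| "conc_part One = One"
| "conc_part (Atom x) = Zero"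
| "conc_part (Plus r s) = Plus (conc_part r) (conc_part s)"
| "conc_part (Times r s) = Times (conc_part r) (conc_part s)"
| "conc_part (Star r) = Star (conc_part r)"
| "conc_part (Fork r) = Fork r"

end

theory Submission
  imports Defs
begin

lemma shuffle_eq: "shuffle v w = shuffles v w"
  by (induction v w rule: shuffle.induct) auto

lemma shuffles_assoc1:
  "x \<in> shuffles u c \<Longrightarrow> u \<in> shuffles a b \<Longrightarrow> \<exists>v. v \<in> shuffles b c \<and> x \<in> shuffles a v"
proof (induction x arbitrary: a b c u)
  case Nil
  then show ?case by auto
next
  case (Cons z zs)
  from Cons.prems(1) have "u \<noteq> [] \<and> hd u = z \<and> zs \<in> shuffles (tl u) c \<or> c \<noteq> [] \<and> hd c = z \<and> zs \<in> shuffles u (tl c)"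
    by (simp only: Cons_in_shuffles_iff)
  then show ?case
  proof (elim disjE conjE)
    assume u: "u \<noteq> []" "hd u = z" "zs \<in> shuffles (tl u) c"
    then have "z # tl u \<in> shuffles a b" using Cons.prems(2) by (cases u) auto
    then have "a \<noteq> [] \<and> hd a = z \<and> tl u \<in> shuffles (tl a) b \<or> b \<noteq> [] \<and> hd b = z \<and> tl u \<in> shuffles a (tl b)"
      by (simp only: Cons_in_shuffles_iff)
    then show ?thesis
    proof (elim disjE conjE)
      assume a: "a \<noteq> []" "hd a = z" "tl u \<in> shuffles (tl a) b"
      from Cons.IH[OF u(3) a(3)] obtain v where "v \<in> shuffles b c" "zs \<in> shuffles (tl a) v" by blast
      then show ?thesis using a by (cases a) (auto simp: Cons_in_shuffles_iff)
    next
      assume b: "b \<noteq> []" "hd b = z" "tl u \<in> shuffles a (tl b)"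
      from Cons.IH[OF u(3) b(3)] obtain v where "v \<in> shuffles (tl b) c" "zs \<in> shuffles a v" by blast
      then show ?thesis using b
        by (cases b) (auto simp: Cons_in_shuffles_iff intro!: exI[of _ "z # v"])
    qed
  next
    assume c: "c \<noteq> []" "hd c = z" "zs \<in> shuffles u (tl c)"
    from Cons.IH[OF c(3) Cons.prems(2)] obtain v where "v \<in> shuffles b (tl c)" "zs \<in> shuffles a v" by blast
    then show ?thesis using c
      by (cases c) (auto simp: Cons_in_shuffles_iff intro!: exI[of _ "z # v"])
  qed
qed

lemma shuffles_assoc2:
  "x \<in> shuffles a v \<Longrightarrow> v \<in> shuffles b c \<Longrightarrow> \<exists>u. u \<in> shuffles a b \<and> x \<in> shuffles u c"
  using shuffles_assoc1[of x v a c b] by (auto simp: shuffles_commutes)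

lemma sl_assoc: "shuffle_lang A (shuffle_lang B K) = shuffle_lang (shuffle_lang A B) K"
proof (intro equalityI subsetI)
  fix x assume "x \<in> shuffle_lang A (shuffle_lang B K)"
  then obtain a b k v where h: "a \<in> A" "b \<in> B" "k \<in> K" "v \<in> shuffles b k" "x \<in> shuffles a v"
    unfolding shuffle_lang_def shuffle_eq by blast
  from shuffles_assoc2[OF h(5,4)] obtain u where "u \<in> shuffles a b" "x \<in> shuffles u k" by blast
  with h show "x \<in> shuffle_lang (shuffle_lang A B) K"
    unfolding shuffle_lang_def shuffle_eq by blast
next
  fix x assume "x \<in> shuffle_lang (shuffle_lang A B) K"
  then obtain a b k u where h: "a \<in> A" "b \<in> B" "k \<in> K" "u \<in> shuffles a b" "x \<in> shuffles u k"
    unfolding shuffle_lang_def shuffle_eq by blast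
  from shuffles_assoc1[OF h(5,4)] obtain v where "v \<in> shuffles b k" "x \<in> shuffles a v" by blast
  with h show "x \<in> shuffle_lang A (shuffle_lang B K)"
    unfolding shuffle_lang_def shuffle_eq by blast
qed

lemma sl_unit_l[simp]: "shuffle_lang {[]} K = K"
  unfolding shuffle_lang_def shuffle_eq by auto

lemma sl_unit_r[simp]: "shuffle_lang L {[]} = L"
  unfolding shuffle_lang_def shuffle_eq by auto

lemma sl_empty[simp]: "shuffle_lang {} K = {}"
  unfolding shuffle_lang_def by auto

lemma sl_Un: "shuffle_lang (A \<union> B) K = shuffle_lang A K \<union> shuffle_lang B K"
  unfolding shuffle_lang_def by auto

lemma sl_mono: "A \<subseteq> A' \<Longrightarrow> B \<subseteq> B' \<Longrightarrow> shuffle_lang A B \<subseteq> shuffle_lang A' B'"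
  unfolding shuffle_lang_def by blast

lemma star_lemma:
  "lfp (\<lambda>X. shuffle_lang A X \<union> K) = shuffle_lang (lfp (\<lambda>X. shuffle_lang A X \<union> {[]})) K"
proof -
  let ?M = "lfp (\<lambda>X. shuffle_lang A X \<union> {[]})"
  let ?P = "lfp (\<lambda>X. shuffle_lang A X \<union> K)"
  have m1: "mono (\<lambda>X. shuffle_lang A X \<union> {[]})" by (rule monoI) (use sl_mono in blast)
  have m2: "mono (\<lambda>X. shuffle_lang A X \<union> K)" by (rule monoI) (use sl_mono in blast)
  have M: "?M = shuffle_lang A ?M \<union> {[]}" by (rule lfp_unfold[OF m1])
  have P: "?P = shuffle_lang A ?P \<union> K" by (rule lfp_unfold[OF m2])
  show ?thesis
  proof
    show "?P \<subseteq> shuffle_lang ?M K"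
    proof (rule lfp_lowerbound)
      have "shuffle_lang A (shuffle_lang ?M K) \<union> K = shuffle_lang (shuffle_lang A ?M \<union> {[]}) K"
        by (simp only: sl_assoc sl_Un sl_unit_l)
      also have "\<dots> = shuffle_lang ?M K" using M by (metis (no_types, lifting))
      finally show "shuffle_lang A (shuffle_lang ?M K) \<union> K \<subseteq> shuffle_lang ?M K" by simp
    qed
  next
    let ?Q = "{v. shuffle_lang {v} K \<subseteq> ?P}"
    have "?M \<subseteq> ?Q"
    proof (rule lfp_lowerbound, rule subsetI)
      fix u assume uu: "u \<in> shuffle_lang A ?Q \<union> {[]}"
      have n: "[] \<in> ?Q" using P by auto
      have s: "u \<in> ?Q" if u: "u \<in> shuffle_lang A ?Q"
      proof -
      from u obtain a q where aq: "a \<in> A" "q \<in> ?Q" "u \<in> shuffle a q"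
        unfolding shuffle_lang_def by blast
      have "shuffle_lang {u} K \<subseteq> shuffle_lang (shuffle_lang {a} {q}) K"
        using aq by (intro sl_mono) (auto simp: shuffle_lang_def)
      also have "\<dots> = shuffle_lang {a} (shuffle_lang {q} K)" by (simp add: sl_assoc)
      also have "\<dots> \<subseteq> shuffle_lang A ?P" using aq by (intro sl_mono) auto
      also have "\<dots> \<subseteq> ?P" using P by blast
      finally show "u \<in> ?Q" by simp
      qed
      show "u \<in> ?Q" using uu n s by blast
    qed
    then show "shuffle_lang ?M K \<subseteq> ?P"
      unfolding shuffle_lang_def by blast
  qed
qed

theorem lemma14:
  fixes r :: "'a::finite beh" and K :: "'a list set"
  shows "trace (conc_part r) K = shuffle_lang (lang (conc_part r)) K"
proof (induction r arbitrary: K)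
  case (Plus r s)
  show ?case by (simp only: conc_part.simps trace.simps Plus.IH[of K] sl_Un)
next
  case (Times r s)
  have "trace (conc_part (Times r s)) K = trace (conc_part r) (trace (conc_part s) K)" by simp
  also have "\<dots> = shuffle_lang (lang (conc_part r)) (shuffle_lang (lang (conc_part s)) K)"
    by (simp only: Times.IH(2)[of K] Times.IH(1)[of "shuffle_lang (lang (conc_part s)) K"])
  also have "\<dots> = shuffle_lang (shuffle_lang (lang (conc_part r)) (lang (conc_part s))) K"
    by (rule sl_assoc)
  also have "shuffle_lang (lang (conc_part r)) (lang (conc_part s)) = lang (conc_part (Times r s))"
    by (simp only: conc_part.simps trace.simps Times.IH(1)[of "trace (conc_part s) {[]}"])
  finally show ?case .
next
  case (Star r)
  have e: "\<And>K'. (\<lambda>X. trace (conc_part r) X \<union> K') = (\<lambda>X. shuffle_lang (lang (conc_part r)) X \<union> K')"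
    by (rule ext, subst Star.IH, rule refl)
  have "trace (conc_part (Star r)) K = lfp (\<lambda>X. shuffle_lang (lang (conc_part r)) X \<union> K)"
    by (simp only: conc_part.simps trace.simps e)
  also have "\<dots> = shuffle_lang (lfp (\<lambda>X. shuffle_lang (lang (conc_part r)) X \<union> {[]})) K"
    by (rule star_lemma)
  also have "lfp (\<lambda>X. shuffle_lang (lang (conc_part r)) X \<union> {[]}) = lang (conc_part (Star r))"
    by (simp only: conc_part.simps trace.simps e)
  finally show ?case .
next
  case Zero show ?case by simp
next
  case One show ?case by simp
next
  case (Atom x) show ?case by simp
next
  case (Fork r) show ?case by simp
qed

end
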